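(* Let $\mathbf{F}_q$ have characteristic $p$, $q>2$, let $1\le k\le q-2$ with $\langle k\rangle_p=p-1$, and let $b\in\mathbf{F}_p$. Then $$N(k,b,\mathbf{F}_q\setminus\{0,1\})=\frac1q\binom{q-2}{k}+(-1)^{k+\lfloor k/p\rfloor}\frac{q-p}{q}\binom{q/p-2}{\lfloor k/p\rfloor}.$$
   Context: $N(k,b,D)$ denotes the number of $k$-element subsets $\{x_1,\dots,x_k\}\subseteq D$ with $x_1+\dots+x_k=b$. $\langle k\rangle_p$ is the least non-negative residue of $k$ modulo $p$. Binomial coefficients $\binom{x}{m}=x(x-1)\cdots(x-m+1)/m!$ for real $x$, integer $m\ge0$. *)

theory Defs
  imports Complex_Main
begin

definition N_subsets :: "nat \<Rightarrow> 'a::comm_monoid_add \<Rightarrow> 'a set \<Rightarrow> nat" where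
  "N_subsets k b D = card {S. S \<subseteq> D \<and> card S = k \<and> finite S \<and> (\<Sum>x\<in>S. x) = b}"

end

theory Submission
  imports Defs "HOL-Computational_Algebra.Primes" "HOL-Number_Theory.Cong"
begin


definition Fp :: "'a::{field,finite} set" where "Fp = range of_nat"

lemma CHAR_gt1: "CHAR('a::{field,finite}) > 1"
proof -
  have "CHAR('a) > 0" by (rule finite_imp_CHAR_pos) simp
  moreover have "CHAR('a) \<noteq> Suc 0" by simp
  ultimately show ?thesis by linarith
qed

lemma CHAR_prime': "prime CHAR('a::{field,finite})"
  using CHAR_gt1 prime_CHAR_semidom by (metis less_trans zero_less_one)

lemma of_nat_eq_mod: "(of_nat a :: 'a::{field,finite}) = of_nat b \<longleftrightarrow> a mod CHAR('a) = b mod CHAR('a)"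
  by (simp add: of_nat_eq_iff_cong_CHAR cong_def)

lemma Fp_eq: "(Fp :: 'a::{field,finite} set) = of_nat ` {..<CHAR('a)}"
proof -
  have "of_nat n \<in> (of_nat ` {..<CHAR('a)} :: 'a set)" for n
  proof -
    have "(of_nat n :: 'a) = of_nat (n mod CHAR('a))" by (simp add: of_nat_eq_mod)
    moreover have "n mod CHAR('a) < CHAR('a)" using CHAR_gt1[where 'a='a] by simp
    ultimately show ?thesis by blast
  qed
  then show ?thesis unfolding Fp_def by auto
qed

lemma card_Fp: "card (Fp :: 'a::{field,finite} set) = CHAR('a)"
proof -
  have "inj_on (of_nat :: nat \<Rightarrow> 'a) {..<CHAR('a)}"
    by (auto simp: inj_on_def of_nat_eq_mod)
  then show ?thesis by (simp add: Fp_eq card_image)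
qed

lemma Fp_add: "x \<in> Fp \<Longrightarrow> y \<in> Fp \<Longrightarrow> x + y \<in> (Fp :: 'a::{field,finite} set)"
  unfolding Fp_def by (auto simp flip: of_nat_add)

lemma Fp_mult: "x \<in> Fp \<Longrightarrow> y \<in> Fp \<Longrightarrow> x * y \<in> (Fp :: 'a::{field,finite} set)"
  unfolding Fp_def by (auto simp flip: of_nat_mult)

lemma Fp_0 [simp]: "0 \<in> (Fp :: 'a::{field,finite} set)" unfolding Fp_def by (metis of_nat_0 rangeI)
lemma Fp_1 [simp]: "1 \<in> (Fp :: 'a::{field,finite} set)" unfolding Fp_def by (metis of_nat_1 rangeI)
lemma Fp_of_nat [simp]: "of_nat n \<in> (Fp :: 'a::{field,finite} set)" unfolding Fp_def by simp

lemma Fp_uminus: "x \<in> Fp \<Longrightarrow> - x \<in> (Fp :: 'a::{field,finite} set)"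
proof -
  assume "x \<in> Fp"
  then obtain a where a: "x = of_nat a" unfolding Fp_def by auto
  have "(of_nat ((CHAR('a) - 1) * a) :: 'a) + of_nat a = of_nat (CHAR('a) * a)"
    using CHAR_gt1[where 'a='a] by (simp add: algebra_simps flip: of_nat_add of_nat_mult)
  also have "\<dots> = 0" by simp
  finally have "- x = of_nat ((CHAR('a) - 1) * a)" using a by (metis add.commute add_eq_0_iff2)
  then show ?thesis by (metis Fp_of_nat)
qed

lemma Fp_diff: "x \<in> Fp \<Longrightarrow> y \<in> Fp \<Longrightarrow> x - y \<in> (Fp :: 'a::{field,finite} set)"
  using Fp_add Fp_uminus by (metis diff_conv_add_uminus)

lemma Fp_inverse: assumes "w \<in> Fp" "w \<noteq> 0" shows "inverse w \<in> (Fp :: 'a::{field,finite} set)"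
proof -
  have "(\<lambda>t. w * t) ` Fp = (Fp :: 'a set)"
    by (rule endo_inj_surj) (auto simp: Fp_mult assms inj_on_def)
  then have "1 \<in> (\<lambda>t. w * t) ` Fp" by simp
  then obtain t where "t \<in> Fp" "w * t = 1" by auto
  then show ?thesis by (metis assms(2) inverse_unique)
qed

lemma Fp_divide: "x \<in> Fp \<Longrightarrow> w \<in> Fp \<Longrightarrow> w \<noteq> 0 \<Longrightarrow> x / w \<in> (Fp :: 'a::{field,finite} set)"
  by (simp add: Fp_inverse Fp_mult divide_inverse)

lemma of_nat_eq_0_iff': "(of_nat n :: 'a::{field,finite}) = 0 \<longleftrightarrow> CHAR('a) dvd n"
  by (rule of_nat_eq_0_iff_char_dvd)



lemma card_fiber_sum:
  fixes F :: "'b set" and f :: "'b \<Rightarrow> 'c"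
  assumes "finite F" "finite B"
  shows "card {x\<in>F. f x \<in> B} = (\<Sum>b\<in>B. card {x\<in>F. f x = b})"
proof -
  have "{x\<in>F. f x \<in> B} = (\<Union>b\<in>B. {x\<in>F. f x = b})" by auto
  moreover have "card (\<Union>b\<in>B. {x\<in>F. f x = b}) = (\<Sum>b\<in>B. card {x\<in>F. f x = b})"
    by (rule card_UN_disjoint) (use assms in auto)
  ultimately show ?thesis by simp
qed

lemma shift_count:
  fixes Fam :: "'a::{field,finite} set set" and \<tau> :: "'a \<Rightarrow> 'a set \<Rightarrow> 'a set" and w :: "'a set \<Rightarrow> 'a"
  assumes closed: "\<And>S t. S \<in> Fam \<Longrightarrow> t \<in> Fp \<Longrightarrow> \<tau> t S \<in> Fam"
  and zero: "\<And>S. S \<in> Fam \<Longrightarrow> \<tau> 0 S = S"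
  and comp: "\<And>S t u. S \<in> Fam \<Longrightarrow> t \<in> Fp \<Longrightarrow> u \<in> Fp \<Longrightarrow> \<tau> u (\<tau> t S) = \<tau> (u + t) S"
  and wt: "\<And>S t. S \<in> Fam \<Longrightarrow> t \<in> Fp \<Longrightarrow> w (\<tau> t S) = w S"
  and wFp: "\<And>S. S \<in> Fam \<Longrightarrow> w S \<in> Fp"
  and wnz: "\<And>S. S \<in> Fam \<Longrightarrow> w S \<noteq> 0"
  and sumt: "\<And>S t. S \<in> Fam \<Longrightarrow> t \<in> Fp \<Longrightarrow> (\<Sum>x\<in>\<tau> t S. x) = (\<Sum>x\<in>S. x) + w S * t"
  and d: "d \<in> Fp"
  shows "card {S\<in>Fam. (\<Sum>x\<in>S. x) = \<sigma>} = card {S\<in>Fam. (\<Sum>x\<in>S. x) = \<sigma> + d}"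
proof -
  define f where "f S = \<tau> (d / w S) S" for S
  define g where "g S = \<tau> (- d / w S) S" for S
  have dF: "d / w S \<in> Fp" "- d / w S \<in> Fp" if "S \<in> Fam" for S
    using Fp_divide[OF d wFp[OF that] wnz[OF that]] Fp_divide[OF Fp_uminus[OF d] wFp[OF that] wnz[OF that]]
    by auto
  have "bij_betw f {S\<in>Fam. (\<Sum>x\<in>S. x) = \<sigma>} {S\<in>Fam. (\<Sum>x\<in>S. x) = \<sigma> + d}"
  proof (rule bij_betw_byWitness[where f'=g])
    show "\<forall>a\<in>{S \<in> Fam. (\<Sum>x\<in>S. x) = \<sigma>}. g (f a) = a"
    proof
      fix S assume "S \<in> {S \<in> Fam. (\<Sum>x\<in>S. x) = \<sigma>}"
      then have S: "S \<in> Fam" by simp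
      have "g (f S) = \<tau> (- d / w S + d / w S) S"
        unfolding g_def f_def using wt[OF S dF(1)[OF S]] comp[OF S dF(1)[OF S] dF(2)[OF S]] by simp
      also have "\<dots> = S" using zero[OF S] by (simp add: divide_minus_left)
      finally show "g (f S) = S" .
    qed
    show "\<forall>a\<in>{S \<in> Fam. (\<Sum>x\<in>S. x) = \<sigma> + d}. f (g a) = a"
    proof
      fix S assume "S \<in> {S \<in> Fam. (\<Sum>x\<in>S. x) = \<sigma> + d}"
      then have S: "S \<in> Fam" by simp
      have "f (g S) = \<tau> (d / w S + - d / w S) S"
        unfolding g_def f_def using wt[OF S dF(2)[OF S]] comp[OF S dF(2)[OF S] dF(1)[OF S]] by simp
      also have "\<dots> = S" using zero[OF S] by (simp add: divide_minus_left)
      finally show "f (g S) = S" .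
    qed
    show "f ` {S \<in> Fam. (\<Sum>x\<in>S. x) = \<sigma>} \<subseteq> {S \<in> Fam. (\<Sum>x\<in>S. x) = \<sigma> + d}"
    proof
      fix T assume "T \<in> f ` {S \<in> Fam. (\<Sum>x\<in>S. x) = \<sigma>}"
      then obtain S where S: "S \<in> Fam" "(\<Sum>x\<in>S. x) = \<sigma>" and T: "T = f S" by auto
      have "(\<Sum>x\<in>T. x) = \<sigma> + w S * (d / w S)" using sumt[OF S(1) dF(1)[OF S(1)]] S T f_def by simp
      also have "\<dots> = \<sigma> + d" using wnz[OF S(1)] by simp
      finally show "T \<in> {S \<in> Fam. (\<Sum>x\<in>S. x) = \<sigma> + d}" using closed[OF S(1) dF(1)[OF S(1)]] T f_def by simp
    qed
    show "g ` {S \<in> Fam. (\<Sum>x\<in>S. x) = \<sigma> + d} \<subseteq> {S \<in> Fam. (\<Sum>x\<in>S. x) = \<sigma>}"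
    proof
      fix T assume "T \<in> g ` {S \<in> Fam. (\<Sum>x\<in>S. x) = \<sigma> + d}"
      then obtain S where S: "S \<in> Fam" "(\<Sum>x\<in>S. x) = \<sigma> + d" and T: "T = g S" by auto
      have "(\<Sum>x\<in>T. x) = \<sigma> + d + w S * (- d / w S)" using sumt[OF S(1) dF(2)[OF S(1)]] S T g_def by simp
      also have "\<dots> = \<sigma>" using wnz[OF S(1)] by simp
      finally show "T \<in> {S \<in> Fam. (\<Sum>x\<in>S. x) = \<sigma>}" using closed[OF S(1) dF(2)[OF S(1)]] T g_def by simp
    qed
  qed
  then show ?thesis by (rule bij_betw_same_card)
qed

definition tr :: "'a::{field,finite} set \<Rightarrow> 'a \<Rightarrow> 'a set \<Rightarrow> 'a set" where
  "tr c t S = (S - c) \<union> (\<lambda>x. t + x) ` (S \<inter> c)"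

locale invset =
  fixes c :: "'a::{field,finite} set"
  assumes inv: "\<And>t x. t \<in> Fp \<Longrightarrow> x \<in> c \<Longrightarrow> t + x \<in> c"
begin

lemma inv': assumes "t \<in> Fp" shows "t + x \<in> c \<longleftrightarrow> x \<in> c"
proof
  assume "t + x \<in> c"
  then have "- t + (t + x) \<in> c" using inv Fp_uminus assms by blast
  then show "x \<in> c" by simp
qed (use inv assms in auto)

lemma tr_inter: "t \<in> Fp \<Longrightarrow> tr c t S \<inter> c = (\<lambda>x. t + x) ` (S \<inter> c)"
  unfolding tr_def using inv by auto

lemma tr_diff: "t \<in> Fp \<Longrightarrow> tr c t S - c = S - c"
  unfolding tr_def using inv by auto

lemma card_tr: "t \<in> Fp \<Longrightarrow> card (tr c t S) = card S"
proof -
  assume t: "t \<in> Fp"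
  have "card (tr c t S) = card (S - c) + card ((\<lambda>x. t + x) ` (S \<inter> c))"
    unfolding tr_def by (rule card_Un_disjoint) (use inv t in auto)
  also have "card ((\<lambda>x. t + x) ` (S \<inter> c)) = card (S \<inter> c)" by (rule card_image) (auto simp: inj_on_def)
  also have "card (S - c) + card (S \<inter> c) = card S"
    by (metis Int_commute add.commute card_Int_Diff finite)
  finally show ?thesis .
qed

lemma tr_tr: "t \<in> Fp \<Longrightarrow> u \<in> Fp \<Longrightarrow> tr c u (tr c t S) = tr c (u + t) S"
  using tr_inter[of t S] tr_diff[of t S]
  unfolding tr_def[of c u "tr c t S"] by (auto simp: tr_def image_image add.assoc)

lemma tr_0: "tr c 0 S = S"
  unfolding tr_def by auto

lemma sum_tr: "t \<in> Fp \<Longrightarrow> (\<Sum>x\<in>tr c t S. x) = (\<Sum>x\<in>S. x) + of_nat (card (S \<inter> c)) * t"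
proof -
  assume t: "t \<in> Fp"
  have "(\<Sum>x\<in>tr c t S. x) = (\<Sum>x\<in>S - c. x) + (\<Sum>x\<in>(\<lambda>x. t + x) ` (S \<inter> c). x)"
    unfolding tr_def by (rule sum.union_disjoint) (use inv t in auto)
  also have "(\<Sum>x\<in>(\<lambda>x. t + x) ` (S \<inter> c). x) = (\<Sum>x\<in>S \<inter> c. t + x)"
    by (subst sum.reindex) (auto simp: inj_on_def)
  also have "\<dots> = of_nat (card (S \<inter> c)) * t + (\<Sum>x\<in>S \<inter> c. x)"
    by (simp add: sum.distrib)
  also have "(\<Sum>x\<in>S - c. x) + (of_nat (card (S \<inter> c)) * t + (\<Sum>x\<in>S \<inter> c. x))
      = ((\<Sum>x\<in>S - c. x) + (\<Sum>x\<in>S \<inter> c. x)) + of_nat (card (S \<inter> c)) * t" by (simp add: algebra_simps)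
  also have "(\<Sum>x\<in>S - c. x) + (\<Sum>x\<in>S \<inter> c. x) = (\<Sum>x\<in>S. x)"
    by (metis Int_commute add.commute finite sum.Int_Diff)
  finally show ?thesis .
qed

end



definition Acnt :: "'a::{field,finite} set \<Rightarrow> nat \<Rightarrow> nat" where
  "Acnt X j = card {S. S \<subseteq> X \<and> card S = j \<and> (\<Sum>x\<in>S. x) \<in> Fp}"

lemma Acnt_0: "Acnt X 0 = 1"
proof -
  have "{S. S \<subseteq> X \<and> card S = 0 \<and> (\<Sum>x\<in>S. x) \<in> Fp} = {{}}" by auto
  then show ?thesis unfolding Acnt_def by simp
qed

lemma Acnt_rec:
  fixes X :: "'a::{field,finite} set"
  assumes a: "a \<in> Fp" "a \<in> X"
  shows "Acnt X (Suc j) = Acnt (X - {a}) (Suc j) + Acnt (X - {a}) j"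
proof -
  let ?L = "{S. S \<subseteq> X \<and> card S = Suc j \<and> (\<Sum>x\<in>S. x) \<in> Fp}"
  let ?B1 = "{S. S \<subseteq> X - {a} \<and> card S = Suc j \<and> (\<Sum>x\<in>S. x) \<in> Fp}"
  let ?B0 = "{S. S \<subseteq> X - {a} \<and> card S = j \<and> (\<Sum>x\<in>S. x) \<in> Fp}"
  have split: "?L = ?B1 \<union> insert a ` ?B0"
  proof (rule set_eqI, rule iffI)
    fix S assume S: "S \<in> ?L"
    show "S \<in> ?B1 \<union> insert a ` ?B0"
    proof (cases "a \<in> S")
      case True
      let ?T = "S - {a}"
      have "card ?T = j" using S True by simp
      moreover have "(\<Sum>x\<in>?T. x) = (\<Sum>x\<in>S. x) - a"
        using True by (simp add: sum_diff1)
      then have "(\<Sum>x\<in>?T. x) \<in> Fp" using S Fp_diff a(1) by auto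
      moreover have "S = insert a ?T" using True by auto
      ultimately show ?thesis using S by blast
    next
      case False then show ?thesis using S by auto
    qed
  next
    fix S assume "S \<in> ?B1 \<union> insert a ` ?B0"
    then show "S \<in> ?L"
    proof
      assume "S \<in> ?B1" then show ?thesis by auto
    next
      assume "S \<in> insert a ` ?B0"
      then obtain T where T: "T \<in> ?B0" "S = insert a T" by auto
      have "a \<notin> T" using T by auto
      then have "card S = Suc j" "(\<Sum>x\<in>S. x) = a + (\<Sum>x\<in>T. x)" using T by auto
      then show ?thesis using T a Fp_add by auto
    qed
  qed
  have "card ?L = card ?B1 + card (insert a ` ?B0)"
    unfolding split by (rule card_Un_disjoint) auto
  also have "card (insert a ` ?B0) = card ?B0"
    by (rule card_image) (auto simp: inj_on_def)
  finally show ?thesis unfolding Acnt_def .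
qed

lemma D_count:
  fixes b :: "'a::{field,finite}"
  assumes k: "k mod CHAR('a) = CHAR('a) - 1" and b: "b \<in> Fp"
  shows "Acnt (UNIV - {0, 1} :: 'a set) k = CHAR('a) * N_subsets k b (UNIV - {0, 1})"
proof -
  let ?p = "CHAR('a)"
  define D :: "'a set" where "D = UNIV - {0, 1}"
  define c :: "'a set" where "c = UNIV - Fp"
  interpret invset c
  proof
    fix t x :: 'a assume "t \<in> Fp" "x \<in> c"
    then show "t + x \<in> c" unfolding c_def using Fp_diff[of "t + x" t] by auto
  qed
  define Fam where "Fam = {S. S \<subseteq> D \<and> card S = k}"
  define w where "w S = (of_nat (card (S \<inter> c)) :: 'a)" for S
  have wnz: "w S \<noteq> 0" if S: "S \<in> Fam" for S
  proof
    assume "w S = 0"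
    then have dv: "?p dvd card (S \<inter> c)" unfolding w_def by (simp add: of_nat_eq_0_iff_char_dvd)
    have "S \<inter> Fp \<subseteq> Fp - {0, 1}" using S unfolding Fam_def D_def by auto
    then have "card (S \<inter> Fp) \<le> card (Fp - {0,1::'a})" by (meson card_mono finite)
    also have "card (Fp - {0,1::'a}) = ?p - 2" using card_Fp[where 'a='a] by (simp add: card_Diff_subset)
    finally have le: "card (S \<inter> Fp) \<le> ?p - 2" .
    have "S \<inter> c = S - Fp" unfolding c_def by auto
    moreover have "card S = card (S \<inter> Fp) + card (S - Fp)"
      by (subst card_Un_disjoint[symmetric]) (auto intro: arg_cong[where f=card])
    ultimately have kk: "k = card (S \<inter> Fp) + card (S \<inter> c)" using S unfolding Fam_def by simp
    from dv obtain r where "card (S \<inter> c) = ?p * r" by (elim dvdE)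
    with kk have "k mod ?p = card (S \<inter> Fp) mod ?p" by simp
    also have "\<dots> = card (S \<inter> Fp)" using le CHAR_gt1[where 'a='a] by simp
    finally show False using k le CHAR_gt1[where 'a='a] by linarith
  qed
  have eq: "card {S\<in>Fam. (\<Sum>x\<in>S. x) = b} = card {S\<in>Fam. (\<Sum>x\<in>S. x) = b + d}" if d: "d \<in> Fp" for d
  proof (rule shift_count[where \<tau>="tr c" and w=w])
    fix S and t :: 'a assume S: "S \<in> Fam" and t: "t \<in> Fp"
    show "tr c t S \<in> Fam"
    proof -
      have "tr c t S \<subseteq> D" using S inv[OF t] unfolding Fam_def tr_def D_def c_def
        by (auto, metis Fp_0, metis Fp_1)
      then show ?thesis using S card_tr[OF t] unfolding Fam_def by auto
    qed
    show "w (tr c t S) = w S" unfolding w_def using tr_inter[OF t, of S]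
      by (simp add: card_image inj_on_def)
    show "(\<Sum>x\<in>tr c t S. x) = (\<Sum>x\<in>S. x) + w S * t" unfolding w_def by (rule sum_tr[OF t])
  next
    fix S and t u :: 'a assume "S \<in> Fam" "t \<in> Fp" "u \<in> Fp"
    then show "tr c u (tr c t S) = tr c (u + t) S" by (simp add: tr_tr)
  qed (use wnz in \<open>auto simp: tr_0 w_def d\<close>)
  have "Acnt D k = card {S\<in>Fam. (\<Sum>x\<in>S. x) \<in> Fp}"
    unfolding Acnt_def Fam_def by (rule arg_cong[where f=card]) auto
  also have "\<dots> = (\<Sum>h\<in>Fp. card {S\<in>Fam. (\<Sum>x\<in>S. x) = h})"
    by (rule card_fiber_sum) auto
  also have "\<dots> = (\<Sum>h\<in>(Fp::'a set). card {S\<in>Fam. (\<Sum>x\<in>S. x) = b})"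
  proof (rule sum.cong[OF refl])
    fix h :: 'a assume "h \<in> Fp"
    then show "card {S\<in>Fam. (\<Sum>x\<in>S. x) = h} = card {S\<in>Fam. (\<Sum>x\<in>S. x) = b}"
      using eq[of "h - b"] Fp_diff[OF _ b] by simp
  qed
  also have "\<dots> = ?p * card {S\<in>Fam. (\<Sum>x\<in>S. x) = b}" using card_Fp[where 'a='a] by simp
  also have "card {S\<in>Fam. (\<Sum>x\<in>S. x) = b} = N_subsets k b D"
    unfolding N_subsets_def Fam_def by (rule arg_cong[where f=card]) auto
  finally show ?thesis unfolding D_def .
qed



definition NF :: "nat \<Rightarrow> 'a::{field,finite} \<Rightarrow> nat" where
  "NF j s = card {S. card S = j \<and> (\<Sum>x\<in>S. x) = s}"

lemma NF_total: "(\<Sum>s\<in>UNIV. NF j (s::'a::{field,finite})) = card (UNIV::'a set) choose j"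
proof -
  have "(\<Sum>s\<in>UNIV. NF j (s::'a)) = card {S\<in>{S::'a set. card S = j}. (\<Sum>x\<in>S. x) \<in> UNIV}"
    unfolding NF_def by (subst card_fiber_sum) auto
  also have "\<dots> = card {S. S \<subseteq> (UNIV::'a set) \<and> card S = j}" by simp
  also have "\<dots> = card (UNIV::'a set) choose j" by (rule n_subsets) simp
  finally show ?thesis .
qed

lemma Acnt_UNIV: "Acnt (UNIV::'a::{field,finite} set) j = (\<Sum>h\<in>Fp. NF j (h::'a))"
proof -
  have "Acnt (UNIV::'a set) j = card {S\<in>{S::'a set. card S = j}. (\<Sum>x\<in>S. x) \<in> Fp}"
    unfolding Acnt_def by simp
  also have "\<dots> = (\<Sum>h\<in>Fp. NF j (h::'a))" unfolding NF_def by (subst card_fiber_sum) auto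
  finally show ?thesis .
qed

lemma NF_image:
  fixes f g :: "'a::{field,finite} \<Rightarrow> 'a"
  assumes gf: "\<And>x. g (f x) = x" and fg: "\<And>x. f (g x) = x"
    and sm: "\<And>S. card S = j \<Longrightarrow> (\<Sum>x\<in>f ` S. x) = s' \<longleftrightarrow> (\<Sum>x\<in>S. x) = s"
  shows "NF j s = NF j s'"
proof -
  have injf: "inj f" and injg: "inj g" by (metis gf injI, metis fg injI)
  have "bij_betw (\<lambda>S. f ` S) {S. card S = j \<and> (\<Sum>x\<in>S. x) = s} {S. card S = j \<and> (\<Sum>x\<in>S. x) = s'}"
  proof (rule bij_betw_byWitness[where f'="\<lambda>S. g ` S"])
    show "\<forall>a\<in>{S. card S = j \<and> (\<Sum>x\<in>S. x) = s}. g ` f ` a = a" by (simp add: image_image gf)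
    show "\<forall>a\<in>{S. card S = j \<and> (\<Sum>x\<in>S. x) = s'}. f ` g ` a = a" by (simp add: image_image fg)
    show "(`) f ` {S. card S = j \<and> (\<Sum>x\<in>S. x) = s} \<subseteq> {S. card S = j \<and> (\<Sum>x\<in>S. x) = s'}"
      using sm injf by (auto simp: card_image inj_on_def)
    show "(`) g ` {S. card S = j \<and> (\<Sum>x\<in>S. x) = s'} \<subseteq> {S. card S = j \<and> (\<Sum>x\<in>S. x) = s}"
    proof
      fix T assume "T \<in> (`) g ` {S. card S = j \<and> (\<Sum>x\<in>S. x) = s'}"
      then obtain S where S: "card S = j" "(\<Sum>x\<in>S. x) = s'" "T = g ` S" by auto
      have "f ` T = S" using S(3) by (simp add: image_image fg)
      moreover have "card T = j" using S injg by (simp add: card_image inj_on_def)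
      ultimately have "(\<Sum>x\<in>T. x) = s" using sm[of T] S by simp
      moreover have "card T = j" using S injg by (simp add: card_image inj_on_def)
      ultimately show "T \<in> {S. card S = j \<and> (\<Sum>x\<in>S. x) = s}" by simp
    qed
  qed
  then show ?thesis unfolding NF_def by (rule bij_betw_same_card)
qed

lemma NF_translate:
  fixes s s' :: "'a::{field,finite}"
  assumes j: "\<not> CHAR('a) dvd j"
  shows "NF j s = NF j s'"
proof -
  define t where "t = (s' - s) / of_nat j"
  have jz: "(of_nat j :: 'a) \<noteq> 0" using j by (simp add: of_nat_eq_0_iff_char_dvd)
  show ?thesis
  proof (rule NF_image[where f="\<lambda>x. x + t" and g="\<lambda>x. x - t"])
    fix S :: "'a set" assume cS: "card S = j"
    have "(\<Sum>x\<in>(\<lambda>x. x + t) ` S. x) = (\<Sum>x\<in>S. x + t)" by (subst sum.reindex) (auto simp: inj_on_def)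
    also have "\<dots> = (\<Sum>x\<in>S. x) + of_nat (card S) * t" by (simp add: sum.distrib)
    finally have e: "(\<Sum>x\<in>(\<lambda>x. x + t) ` S. x) = (\<Sum>x\<in>S. x) + of_nat (card S) * t" .
    show "(\<Sum>x\<in>(\<lambda>x. x + t) ` S. x) = s' \<longleftrightarrow> (\<Sum>x\<in>S. x) = s"
    proof -
      have jt: "of_nat j * t = s' - s" using jz by (simp add: t_def)
      show ?thesis unfolding e cS jt by (auto simp: algebra_simps)
    qed
  qed auto
qed



lemma NF_scale:
  fixes s s' :: "'a::{field,finite}"
  assumes "s \<noteq> 0" "s' \<noteq> 0"
  shows "NF j s = NF j s'"
proof -
  define l where "l = s' / s"
  have l: "l \<noteq> 0" using assms by (simp add: l_def)
  show ?thesis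
  proof (rule NF_image[where f="\<lambda>x. l * x" and g="\<lambda>x. x / l"])
    fix S :: "'a set"
    have "(\<Sum>x\<in>(\<lambda>x. l * x) ` S. x) = (\<Sum>x\<in>S. l * x)" by (subst sum.reindex) (use l in \<open>auto simp: inj_on_def\<close>)
    also have "\<dots> = l * (\<Sum>x\<in>S. x)" by (simp add: sum_distrib_left)
    finally show "(\<Sum>x\<in>(\<lambda>x. l * x) ` S. x) = s' \<longleftrightarrow> (\<Sum>x\<in>S. x) = s"
      using assms l unfolding l_def by (auto simp: field_simps)
  qed (use l in auto)
qed

definition coset :: "'a::{field,finite} \<Rightarrow> 'a set" where
  "coset x = (\<lambda>t. x + t) ` Fp"

definition Cos :: "'a::{field,finite} set set" where "Cos = range coset"

lemma card_coset: "card (coset (x::'a::{field,finite})) = CHAR('a)"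
  unfolding coset_def by (subst card_image) (auto simp: inj_on_def card_Fp)

lemma in_coset: "x \<in> coset x"
  unfolding coset_def by (metis Fp_0 add_0_right image_eqI)

lemma coset_inv: "t \<in> Fp \<Longrightarrow> x \<in> coset y \<Longrightarrow> t + x \<in> coset y"
proof -
  assume t: "t \<in> Fp" and "x \<in> coset y"
  then obtain s where s: "s \<in> Fp" "x = y + s" unfolding coset_def by auto
  have "t + x = y + (t + s)" using s by (simp add: algebra_simps)
  then show ?thesis unfolding coset_def using Fp_add[OF t s(1)] by auto
qed

lemma coset_eq: assumes "y \<in> coset x" shows "coset y = coset x"
proof -
  obtain s where s: "s \<in> Fp" "y = x + s" using assms unfolding coset_def by auto
  show ?thesis
  proof
    show "coset y \<subseteq> coset x"
      unfolding coset_def using s Fp_add by (auto simp: add.assoc)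
    show "coset x \<subseteq> coset y"
    proof
      fix z assume "z \<in> coset x"
      then obtain u where u: "u \<in> Fp" "z = x + u" unfolding coset_def by auto
      have "z = y + (u - s)" using s u by simp
      moreover have "u - s \<in> Fp" using u s Fp_diff by auto
      ultimately show "z \<in> coset y" unfolding coset_def by auto
    qed
  qed
qed

lemma coset_meet: "z \<in> coset x \<Longrightarrow> z \<in> coset y \<Longrightarrow> coset x = coset y"
  by (metis coset_eq)

lemma Cos_disj: "c \<in> Cos \<Longrightarrow> d \<in> Cos \<Longrightarrow> c \<noteq> d \<Longrightarrow> c \<inter> d = {}"
  unfolding Cos_def using coset_meet by blast

lemma Cos_pw: fixes C :: "'a::{field,finite} set set"
  shows "C \<subseteq> Cos \<Longrightarrow> c1 \<in> C \<Longrightarrow> c2 \<in> C \<Longrightarrow> c1 \<noteq> c2 \<Longrightarrow> c1 \<inter> c2 = {}"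
  using Cos_disj by blast

lemma Cos_card: fixes C :: "'a::{field,finite} set set"
  shows "C \<subseteq> Cos \<Longrightarrow> c \<in> C \<Longrightarrow> card c = CHAR('a)"
proof -
  assume "C \<subseteq> Cos" "c \<in> C"
  then obtain x :: 'a where "c = coset x" unfolding Cos_def by auto
  then show "card c = CHAR('a)" by (simp add: card_coset)
qed

lemma Cos_invset: "c \<in> Cos \<Longrightarrow> invset c"
  unfolding Cos_def by unfold_locales (auto intro: coset_inv)

lemma Union_Cos: "\<Union>Cos = UNIV"
  unfolding Cos_def using in_coset by blast

lemma card_Cos: "CHAR('a) * card (Cos :: 'a::{field,finite} set set) = card (UNIV :: 'a set)"
proof -
  have "CHAR('a) * card (Cos :: 'a set set) = card (\<Union>(Cos :: 'a set set))"
    by (rule card_partition[OF _ _ Cos_card[OF order_refl] Cos_pw[OF order_refl]]) auto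
  then show ?thesis by (simp add: Union_Cos)
qed

definition zsum :: "'a::{field,finite}" where "zsum = (\<Sum>x\<in>Fp. x)"

lemma sum_coset: "(\<Sum>x\<in>coset y. x) = (zsum :: 'a::{field,finite})"
proof -
  have "(\<Sum>x\<in>coset y. x) = (\<Sum>t\<in>Fp. y + t)"
    unfolding coset_def by (subst sum.reindex) (auto simp: inj_on_def)
  also have "\<dots> = of_nat CHAR('a) * y + zsum" by (simp add: sum.distrib card_Fp zsum_def)
  finally show ?thesis by simp
qed

lemma zsum_eq: "(zsum :: 'a::{field,finite}) = of_nat (CHAR('a) * (CHAR('a) - 1) div 2)"
proof -
  have "(zsum :: 'a) = (\<Sum>i\<in>{0..<CHAR('a)}. of_nat i)"
    unfolding zsum_def Fp_eq by (subst sum.reindex) (auto simp: inj_on_def of_nat_eq_mod lessThan_atLeast0)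
  also have "\<dots> = of_nat (\<Sum>i\<in>{0..<CHAR('a)}. i)" by simp
  also have "(\<Sum>i\<in>{0..<CHAR('a)}. i) = CHAR('a) * (CHAR('a) - 1) div 2" using Sum_Ico_nat[of 0 "CHAR('a)"] by simp
  finally show ?thesis .
qed

definition cclosed :: "'a::{field,finite} set \<Rightarrow> bool" where
  "cclosed S \<longleftrightarrow> (\<forall>x\<in>S. coset x \<subseteq> S)"

definition cin :: "'a::{field,finite} set \<Rightarrow> 'a set set" where
  "cin S = {c\<in>Cos. c \<subseteq> S}"

lemma cclosed_Union: "cclosed S \<Longrightarrow> \<Union>(cin S) = S"
  unfolding cclosed_def cin_def Cos_def using in_coset by blast

lemma cclosed_card: "cclosed S \<Longrightarrow> card S = CHAR('a) * card (cin (S::'a::{field,finite} set))"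
proof -
  assume cl: "cclosed S"
  have sub: "cin S \<subseteq> Cos" by (auto simp: cin_def)
  have "CHAR('a) * card (cin S) = card (\<Union>(cin S))"
    by (rule card_partition[OF _ _ Cos_card[OF sub] Cos_pw[OF sub]]) auto
  then show ?thesis using cclosed_Union[OF cl] by simp
qed

lemma cclosed_sum: "cclosed S \<Longrightarrow> (\<Sum>x\<in>S. x) = of_nat (card (cin S)) * (zsum::'a::{field,finite})"
proof -
  assume cl: "cclosed S"
  have "(\<Sum>x\<in>S. x) = (\<Sum>x\<in>\<Union>(cin S). x)" using cclosed_Union[OF cl] by simp
  also have "\<dots> = (\<Sum>c\<in>cin S. \<Sum>x\<in>c. x)"
    by (subst sum.Union_disjoint) (auto simp: cin_def dest: Cos_disj)
  also have "\<dots> = (\<Sum>c\<in>cin S. zsum)"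
    by (rule sum.cong) (auto simp: cin_def Cos_def sum_coset)
  finally show ?thesis by simp
qed

lemma count_cclosed:
  assumes "j = CHAR('a::{field,finite}) * m"
  shows "card {S::'a set. card S = j \<and> cclosed S} = card (Cos :: 'a set set) choose m"
proof -
  have "bij_betw cin {S::'a set. card S = j \<and> cclosed S} {C. C \<subseteq> Cos \<and> card C = m}"
  proof (rule bij_betw_byWitness[where f'=Union])
    show "\<forall>S\<in>{S::'a set. card S = j \<and> cclosed S}. \<Union>(cin S) = S" using cclosed_Union by blast
    show "\<forall>C\<in>{C. C \<subseteq> Cos \<and> card C = m}. cin (\<Union>C) = (C :: 'a set set)"
    proof
      fix C :: "'a set set" assume C: "C \<in> {C. C \<subseteq> Cos \<and> card C = m}"
      show "cin (\<Union>C) = C"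
      proof
        show "C \<subseteq> cin (\<Union>C)" using C unfolding cin_def by auto
        show "cin (\<Union>C) \<subseteq> C"
        proof
          fix c assume c: "c \<in> cin (\<Union>C)"
          then have cC: "c \<in> Cos" "c \<subseteq> \<Union>C" unfolding cin_def by auto
          obtain x where "c = coset x" using cC unfolding Cos_def by auto
          then have "x \<in> c" using in_coset by simp
          then obtain d where d: "d \<in> C" "x \<in> d" using cC by auto
          then have "c \<inter> d \<noteq> {}" using \<open>x \<in> c\<close> by auto
          then have "c = d" using Cos_disj[OF cC(1)] C d by auto
          then show "c \<in> C" using d by simp
        qed
      qed
    qed
    show "cin ` {S::'a set. card S = j \<and> cclosed S} \<subseteq> {C. C \<subseteq> Cos \<and> card C = m}"
    proof
      fix C assume "C \<in> cin ` {S::'a set. card S = j \<and> cclosed S}"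
      then obtain S where S: "card S = j" "cclosed S" "C = cin S" by auto
      have e: "CHAR('a) * card C = CHAR('a) * m" using cclosed_card[OF S(2)] S assms by presburger
      have "CHAR('a) > 0" using CHAR_gt1[where 'a='a] by simp
      then have "card C = m" using e by simp
      then show "C \<in> {C. C \<subseteq> Cos \<and> card C = m}" using S unfolding cin_def by auto
    qed
    show "Union ` {C. C \<subseteq> Cos \<and> card C = m} \<subseteq> {S::'a set. card S = j \<and> cclosed S}"
    proof
      fix S assume "S \<in> Union ` {C. C \<subseteq> (Cos :: 'a set set) \<and> card C = m}"
      then obtain C where C: "C \<subseteq> Cos" "card C = m" "S = \<Union>C" by auto
      have cl: "cclosed S"
        unfolding cclosed_def
      proof
        fix x assume "x \<in> S"
        then obtain c where c: "c \<in> C" "x \<in> c" using C by auto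
        obtain y where "c = coset y" using c C unfolding Cos_def by auto
        then have "coset x = c" using coset_eq c by simp
        then show "coset x \<subseteq> S" using c C by auto
      qed
      have "card S = CHAR('a) * card C"
        unfolding C(3) by (rule card_partition[OF _ _ Cos_card[OF C(1)] Cos_pw[OF C(1)], symmetric]) (use C in auto)
      then show "S \<in> {S. card S = j \<and> cclosed S}" using cl C assms by simp
    qed
  qed
  then have "card {S::'a set. card S = j \<and> cclosed S} = card {C. C \<subseteq> (Cos :: 'a set set) \<and> card C = m}"
    by (rule bij_betw_same_card)
  also have "\<dots> = card (Cos :: 'a set set) choose m" by (rule n_subsets) simp
  finally show ?thesis .
qed



definition pcs :: "'a::{field,finite} set \<Rightarrow> 'a set set" where
  "pcs S = {c\<in>Cos. c \<inter> S \<noteq> {} \<and> \<not> c \<subseteq> S}"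

lemma cclosed_iff: "cclosed S \<longleftrightarrow> pcs S = {}"
proof
  assume cl: "cclosed S"
  show "pcs S = {}"
  proof (rule ccontr)
    assume "pcs S \<noteq> {}"
    then obtain c where c: "c \<in> Cos" "c \<inter> S \<noteq> {}" "\<not> c \<subseteq> S" unfolding pcs_def by auto
    then obtain x where x: "x \<in> c" "x \<in> S" by auto
    obtain y where "c = coset y" using c unfolding Cos_def by auto
    then have "coset x = c" using coset_eq x by simp
    then show False using cl x c unfolding cclosed_def by auto
  qed
next
  assume e: "pcs S = {}"
  show "cclosed S" unfolding cclosed_def
  proof
    fix x assume x: "x \<in> S"
    have "coset x \<in> Cos" unfolding Cos_def by simp
    moreover have "coset x \<inter> S \<noteq> {}" using x in_coset by auto
    ultimately show "coset x \<subseteq> S" using e unfolding pcs_def by auto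
  qed
qed

lemma pcs_tr:
  assumes c: "c \<in> pcs S" and t: "t \<in> Fp"
  shows "pcs (tr c t S) = pcs S"
proof -
  have cC: "c \<in> Cos" using c unfolding pcs_def by auto
  interpret invset c by (rule Cos_invset[OF cC])
  have i1: "tr c t S \<inter> c = (\<lambda>x. t + x) ` (S \<inter> c)" by (rule tr_inter[OF t])
  have i2: "tr c t S - c = S - c" by (rule tr_diff[OF t])
  have cardc: "card c = CHAR('a)" using Cos_card[OF order_refl cC] .
  have ccase: "c \<inter> tr c t S \<noteq> {} \<and> \<not> c \<subseteq> tr c t S"
  proof
    show "c \<inter> tr c t S \<noteq> {}" using i1 c unfolding pcs_def by auto
    show "\<not> c \<subseteq> tr c t S"
    proof
      assume "c \<subseteq> tr c t S"
      then have "tr c t S \<inter> c = c" by auto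
      then have "card (S \<inter> c) = card c" using i1 by (metis card_image inj_on_def add_left_cancel)
      then have "S \<inter> c = c" by (metis Int_lower2 card_subset_eq finite)
      then show False using c unfolding pcs_def by auto
    qed
  qed
  have other: "d \<inter> tr c t S = d \<inter> S" if "d \<in> Cos" "d \<noteq> c" for d
  proof -
    have dc: "d \<inter> c = {}" using Cos_disj[OF that(1) cC that(2)] .
    have "d \<inter> tr c t S = d \<inter> (tr c t S - c)" using dc by auto
    also have "\<dots> = d \<inter> (S - c)" using i2 by simp
    also have "\<dots> = d \<inter> S" using dc by auto
    finally show ?thesis .
  qed
  show ?thesis
  proof (rule set_eqI)
    fix d show "d \<in> pcs (tr c t S) \<longleftrightarrow> d \<in> pcs S"
    proof (cases "d = c")
      case True then show ?thesis using ccase c unfolding pcs_def by auto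
    next
      case False
      show ?thesis
      proof (cases "d \<in> Cos")
        case True
        have "d \<subseteq> tr c t S \<longleftrightarrow> d \<subseteq> S" using other[OF True False] by blast
        then show ?thesis using other[OF True False] True unfolding pcs_def by auto
      qed (auto simp: pcs_def)
    qed
  qed
qed

definition cS :: "'a::{field,finite} set \<Rightarrow> 'a set" where
  "cS S = (SOME c. c \<in> pcs S)"

lemma cS_in: "\<not> cclosed S \<Longrightarrow> cS S \<in> pcs S"
  unfolding cS_def using cclosed_iff by (metis ex_in_conv someI_ex)

lemma R_shift:
  fixes d :: "'a::{field,finite}"
  assumes d: "d \<in> Fp"
  shows "card {S\<in>{S. card S = j \<and> \<not> cclosed S}. (\<Sum>x\<in>S. x) = \<sigma>}
       = card {S\<in>{S. card S = j \<and> \<not> cclosed S}. (\<Sum>x\<in>S. x) = \<sigma> + d}"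
proof -
  define Fam where "Fam = {S::'a set. card S = j \<and> \<not> cclosed S}"
  define \<tau> where "\<tau> (t::'a) (S::'a set) = tr (cS S) t S" for t S
  define w where "w (S::'a set) = (of_nat (card (S \<inter> cS S)) :: 'a)" for S
  have cin: "cS S \<in> pcs S" if "S \<in> Fam" for S using cS_in that unfolding Fam_def by auto
  have inv: "invset (cS S)" if "S \<in> Fam" for S using cin[OF that] Cos_invset unfolding pcs_def by auto
  have pcs\<tau>: "pcs (\<tau> t S) = pcs S" if "S \<in> Fam" "t \<in> Fp" for S t
    unfolding \<tau>_def by (rule pcs_tr[OF cin[OF that(1)] that(2)])
  have cS\<tau>: "cS (\<tau> t S) = cS S" if "S \<in> Fam" "t \<in> Fp" for S t
    unfolding cS_def using pcs\<tau>[OF that] by simp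
  have "card {S\<in>Fam. (\<Sum>x\<in>S. x) = \<sigma>} = card {S\<in>Fam. (\<Sum>x\<in>S. x) = \<sigma> + d}"
  proof (rule shift_count[where \<tau>=\<tau> and w=w])
    fix S and t :: 'a assume S: "S \<in> Fam" and t: "t \<in> Fp"
    interpret invset "cS S" by (rule inv[OF S])
    show "\<tau> t S \<in> Fam"
    proof -
      have "\<not> cclosed (\<tau> t S)" using S pcs\<tau>[OF S t] unfolding Fam_def cclosed_iff by simp
      then show ?thesis using S card_tr[OF t] unfolding Fam_def \<tau>_def by simp
    qed
    show "w (\<tau> t S) = w S" unfolding w_def cS\<tau>[OF S t] unfolding \<tau>_def using tr_inter[OF t, of S]
      by (simp add: card_image inj_on_def)
    show "(\<Sum>x\<in>\<tau> t S. x) = (\<Sum>x\<in>S. x) + w S * t" unfolding w_def \<tau>_def by (rule sum_tr[OF t])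
  next
    fix S and t u :: 'a assume S: "S \<in> Fam" and t: "t \<in> Fp" and u: "u \<in> Fp"
    interpret invset "cS S" by (rule inv[OF S])
    show "\<tau> u (\<tau> t S) = \<tau> (u + t) S"
      unfolding \<tau>_def[of u] cS\<tau>[OF S t] unfolding \<tau>_def by (rule tr_tr[OF t u])
  next
    fix S assume S: "S \<in> Fam"
    interpret invset "cS S" by (rule inv[OF S])
    show "\<tau> 0 S = S" unfolding \<tau>_def by (rule tr_0)
    show "w S \<in> Fp" unfolding w_def by simp
    show "w S \<noteq> 0"
    proof
      assume "w S = 0"
      then have dv: "CHAR('a) dvd card (S \<inter> cS S)" unfolding w_def by (simp add: of_nat_eq_0_iff_char_dvd)
      have pc: "cS S \<in> Cos" "cS S \<inter> S \<noteq> {}" "\<not> cS S \<subseteq> S" using cin[OF S] unfolding pcs_def by auto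
      have "card (S \<inter> cS S) > 0" using pc(2) by (simp add: Int_commute card_gt_0_iff)
      moreover have "card (S \<inter> cS S) < card (cS S)"
        by (rule psubset_card_mono) (use pc(3) in auto)
      moreover have "card (cS S) = CHAR('a)" using Cos_card[OF order_refl pc(1)] .
      ultimately show False using dv by (metis nat_dvd_not_less)
    qed
  qed (rule d)
  then show ?thesis unfolding Fam_def .
qed

lemma NF_split:
  fixes \<sigma> :: "'a::{field,finite}"
  shows "NF j \<sigma> = card {S\<in>{S. card S = j \<and> \<not> cclosed S}. (\<Sum>x\<in>S. x) = \<sigma>}
              + card {S. card S = j \<and> cclosed S \<and> (\<Sum>x\<in>S. x) = \<sigma>}"
  unfolding NF_def by (subst card_Un_disjoint[symmetric]) (auto intro: arg_cong[where f=card])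

lemma P_count:
  fixes \<sigma> :: "'a::{field,finite}"
  assumes j: "j = CHAR('a) * m"
  shows "card {S. card S = j \<and> cclosed S \<and> (\<Sum>x\<in>S. x) = \<sigma>}
       = (if \<sigma> = of_nat m * zsum then card (Cos :: 'a set set) choose m else 0)"
proof -
  have sm: "(\<Sum>x\<in>S. x) = of_nat m * zsum" if "card S = j" "cclosed S" for S :: "'a set"
  proof -
    have "CHAR('a) * card (cin S) = CHAR('a) * m" using cclosed_card[OF that(2)] that(1) j by presburger
    then have "card (cin S) = m" using CHAR_gt1[where 'a='a] by simp
    then show ?thesis using cclosed_sum[OF that(2)] by simp
  qed
  show ?thesis
  proof (cases "\<sigma> = of_nat m * zsum")
    case True
    then have "{S. card S = j \<and> cclosed S \<and> (\<Sum>x\<in>S. x) = \<sigma>} = {S::'a set. card S = j \<and> cclosed S}"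
      using sm by auto
    then show ?thesis using True count_cclosed[OF j] by simp
  next
    case False
    then have "{S. card S = j \<and> cclosed S \<and> (\<Sum>x\<in>S. x) = \<sigma>} = {}" using sm by auto
    then show ?thesis using False by simp
  qed
qed

lemma NF_diff:
  assumes j: "j = CHAR('a::{field,finite}) * m"
  shows "int (NF j (0::'a)) - int (NF j (1::'a)) = int (card (Cos :: 'a set set) choose m) *
     ((if of_nat m * zsum = (0::'a) then 1 else 0) - (if of_nat m * zsum = (1::'a) then 1 else 0))"
proof -
  define R where "R \<sigma> = card {S\<in>{S. card S = j \<and> \<not> cclosed S}. (\<Sum>x\<in>S. x) = (\<sigma>::'a)}" for \<sigma>
  define P where "P \<sigma> = card {S::'a set. card S = j \<and> cclosed S \<and> (\<Sum>x\<in>S. x) = \<sigma>}" for \<sigma>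
  have r: "R 0 = R 1" unfolding R_def using R_shift[of "1::'a" j 0] by simp
  have n0: "NF j (0::'a) = R 0 + P 0" and n1: "NF j (1::'a) = R 1 + P 1"
    unfolding R_def P_def by (rule NF_split)+
  have p0: "P 0 = (if (0::'a) = of_nat m * zsum then card (Cos :: 'a set set) choose m else 0)"
    unfolding P_def by (rule P_count[OF j])
  have p1: "P 1 = (if (1::'a) = of_nat m * zsum then card (Cos :: 'a set set) choose m else 0)"
    unfolding P_def by (rule P_count[OF j])
  have "int (NF j (0::'a)) - int (NF j (1::'a)) = int (P 0) - int (P 1)" unfolding n0 n1 r by simp
  also have "\<dots> = int (card (Cos :: 'a set set) choose m) *
     ((if of_nat m * zsum = (0::'a) then 1 else 0) - (if of_nat m * zsum = (1::'a) then 1 else 0))"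
    unfolding p0 p1 by (cases "of_nat m * zsum = (0::'a)"; cases "of_nat m * zsum = (1::'a)") auto
  finally show ?thesis .
qed



lemma sign_lemma:
  "(if of_nat m * zsum = (0::'a::{field,finite}) then 1 else 0) - (if of_nat m * zsum = (1::'a) then 1 else 0)
   = (-1::int) ^ (CHAR('a) * m + m)"
proof -
  let ?p = "CHAR('a)"
  have pr: "prime ?p" by (rule CHAR_prime')
  show ?thesis
  proof (cases "?p = 2")
    case True
    have z: "(zsum::'a) = 1" using zsum_eq[where 'a='a] True by simp
    have e0: "(of_nat m :: 'a) = 0 \<longleftrightarrow> even m" using True by (simp add: of_nat_eq_0_iff_char_dvd)
    have e1: "(of_nat m :: 'a) = 1 \<longleftrightarrow> odd m" using True of_nat_eq_mod[of m 1, where 'a='a]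
      by (simp add: odd_iff_mod_2_eq_one)
    have "(-1::int) ^ (?p * m + m) = (-1) ^ m" using True
      by (simp add: power_add power_mult)
    then show ?thesis using z e0 e1 by auto
  next
    case False
    then have odd: "odd ?p" using pr prime_odd_nat prime_ge_2_nat by (metis le_neq_implies_less)
    then obtain r where r: "?p = 2 * r + 1" by (metis oddE)
    have "?p * (?p - 1) div 2 = ?p * r" using r by simp
    then have z: "(zsum::'a) = 0" using zsum_eq[where 'a='a] by simp
    have "?p * m + m = 2 * ((r + 1) * m)" using r by (simp add: algebra_simps)
    then have "(-1::int) ^ (?p * m + m) = 1" by (simp add: power_mult)
    then show ?thesis using z by simp
  qed
qed

lemma A0_formula:
  fixes j :: nat
  defines "p \<equiv> CHAR('a::{field,finite})" and "q \<equiv> card (UNIV :: 'a set)" and "Q \<equiv> card (Cos :: 'a set set)"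
  shows "real (Acnt (UNIV :: 'a set) j) = real p * real (q choose j) / real q
     + (if p dvd j then (real q - real p) / real q * (-1) ^ (j + j div p) * real (Q choose (j div p)) else 0)"
proof -
  have pq: "p * Q = q" unfolding p_def Q_def q_def by (rule card_Cos)
  have p1: "p > 1" unfolding p_def by (rule CHAR_gt1)
  have q0: "q > 0" unfolding q_def by (simp add: finite_UNIV_card_ge_0)
  have tot: "(\<Sum>s\<in>UNIV. NF j (s::'a)) = q choose j" unfolding q_def by (rule NF_total)
  have cFp: "card (Fp :: 'a set) = p" unfolding p_def by (rule card_Fp)
  show ?thesis
  proof (cases "p dvd j")
    case False
    have eq: "NF j s = NF j (0::'a)" for s :: 'a by (rule NF_translate) (use False in \<open>simp add: p_def\<close>)
    have "(\<Sum>s\<in>UNIV. NF j (s::'a)) = (\<Sum>s\<in>(UNIV::'a set). NF j (0::'a))" by (rule sum.cong[OF refl eq])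
    then have "q * NF j (0::'a) = q choose j" using tot by (simp add: q_def)
    then have e: "real (NF j (0::'a)) = real (q choose j) / real q" using q0
      proof -
        have "real q * real (NF j (0::'a)) = real (q choose j)" using \<open>q * NF j (0::'a) = q choose j\<close> by (metis of_nat_mult)
        then show ?thesis using q0 by (simp add: field_simps)
      qed
    have "(\<Sum>s\<in>Fp. NF j (s::'a)) = (\<Sum>s\<in>(Fp::'a set). NF j (0::'a))" by (rule sum.cong[OF refl eq])
    then have "Acnt (UNIV :: 'a set) j = p * NF j (0::'a)" using cFp by (simp add: Acnt_UNIV)
    then show ?thesis using False e by simp
  next
    case True
    then obtain m where m: "j = p * m" by (elim dvdE)
    have jm: "j div p = m" using m p1 by simp
    let ?N0 = "NF j (0::'a)" and ?N1 = "NF j (1::'a)"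
    have d: "int ?N0 - int ?N1 = int (Q choose m) * (-1) ^ (j + m)"
    proof -
      have "int ?N0 - int ?N1 = int (Q choose m) *
         ((if of_nat m * zsum = (0::'a) then 1 else 0) - (if of_nat m * zsum = (1::'a) then 1 else 0))"
        unfolding Q_def by (rule NF_diff[OF m[unfolded p_def]])
      also have "\<dots> = int (Q choose m) * (-1) ^ (j + m)" unfolding sign_lemma m p_def by simp
      finally show ?thesis .
    qed
    have nz: "NF j s = ?N1" if "s \<noteq> 0" for s :: 'a by (rule NF_scale) (use that in auto)
    have "(\<Sum>s\<in>UNIV. NF j (s::'a)) = ?N0 + (\<Sum>s\<in>UNIV - {0}. NF j (s::'a))"
      by (subst sum.remove[of UNIV 0]) auto
    also have "(\<Sum>s\<in>UNIV - {0}. NF j (s::'a)) = (\<Sum>s\<in>UNIV - {0::'a}. ?N1)"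
      by (rule sum.cong[OF refl], rule nz) auto
    also have "\<dots> = (q - 1) * ?N1" by (simp add: q_def card_Diff_singleton)
    finally have t2: "?N0 + (q - 1) * ?N1 = q choose j" using tot by simp
    have "Acnt (UNIV :: 'a set) j = ?N0 + (\<Sum>s\<in>Fp - {0}. NF j (s::'a))"
      unfolding Acnt_UNIV by (subst sum.remove[of Fp 0]) auto
    also have "(\<Sum>s\<in>Fp - {0}. NF j (s::'a)) = (\<Sum>s\<in>Fp - {0::'a}. ?N1)"
      by (rule sum.cong[OF refl], rule nz) auto
    also have "\<dots> = (p - 1) * ?N1" using cFp by (simp add: card_Diff_singleton)
    finally have a2: "Acnt (UNIV :: 'a set) j = ?N0 + (p - 1) * ?N1" .
    have rd: "real ?N0 = real ?N1 + real (Q choose m) * (-1) ^ (j + m)"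
    proof -
      have "real_of_int (int ?N0 - int ?N1) = real_of_int (int (Q choose m) * (-1) ^ (j + m))" using d by simp
      then show ?thesis by simp
    qed
    have rt: "real ?N0 + (real q - 1) * real ?N1 = real (q choose j)"
    proof -
      have "real (?N0 + (q - 1) * ?N1) = real (q choose j)" using t2 by simp
      then show ?thesis using q0 by (simp add: of_nat_diff Suc_le_eq)
    qed
    have ra: "real (Acnt (UNIV :: 'a set) j) = real ?N0 + (real p - 1) * real ?N1"
      using a2 p1 by simp
    have qr: "real q \<noteq> 0" using q0 by simp
    show ?thesis using True jm rd rt ra qr
    proof -
      define D where "D = real (Q choose m) * (-1) ^ (j + m)"
      have n1: "real ?N1 = (real (q choose j) - D) / real q"
        using rt rd qr unfolding D_def[symmetric] by (simp add: field_simps)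
      have "real (Acnt (UNIV :: 'a set) j) = real p * real ?N1 + D" using ra rd unfolding D_def[symmetric]
        by (simp add: algebra_simps)
      also have "\<dots> = real p * real (q choose j) / real q + (real q - real p) / real q * D"
        unfolding n1 using qr by (simp add: field_simps)
      finally show ?thesis using True jm unfolding D_def by (simp add: algebra_simps)
    qed
  qed
qed



definition A0f :: "nat \<Rightarrow> nat \<Rightarrow> nat \<Rightarrow> nat \<Rightarrow> real" where
  "A0f p q Q j = real p * real (q choose j) / real q
     + (real q - real p) / real q * (if p dvd j then (-1) ^ (j + j div p) * real (Q choose (j div p)) else 0)"

definition F1 :: "nat \<Rightarrow> nat \<Rightarrow> nat \<Rightarrow> nat \<Rightarrow> real" where
  "F1 p q Q j = real p * real ((q - 1) choose j) / real q
     + (real q - real p) / real q * ((-1) ^ (j + j div p) * real ((Q - 1) choose (j div p)))"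

definition G :: "nat \<Rightarrow> nat \<Rightarrow> nat \<Rightarrow> real" where
  "G p Q i = (-1) ^ (i div p) * real ((Q - 1) choose (i div p))"

definition F2 :: "nat \<Rightarrow> nat \<Rightarrow> nat \<Rightarrow> nat \<Rightarrow> real" where
  "F2 p q Q j = real p * real ((q - 2) choose j) / real q
     + (real q - real p) / real q * ((-1) ^ j * (\<Sum>i<Suc j. G p Q i))"

lemma lin_comb: "x1 + x2 = (x::real) \<Longrightarrow> y1 + y2 = y \<Longrightarrow> (x1 + c * y1) + (x2 + c * y2) = x + c * y"
  by (auto simp: algebra_simps)

lemma F1_0: "q > 0 \<Longrightarrow> p > 0 \<Longrightarrow> F1 p q Q 0 = 1"
  unfolding F1_def by (simp add: field_simps)

lemma F1_step:
  assumes p: "p > 1" and q: "q > 0" and Q: "Q > 0"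
  shows "F1 p q Q (Suc j) + F1 p q Q j = A0f p q Q (Suc j)"
proof -
  have bq: "real (q choose Suc j) = real ((q - 1) choose Suc j) + real ((q - 1) choose j)"
    using q binomial_Suc_Suc[of "q - 1" j] by simp
  have b1: "real p * real ((q - 1) choose Suc j) / real q + real p * real ((q - 1) choose j) / real q
      = real p * real (q choose Suc j) / real q" unfolding bq by (simp add: distrib_left add_divide_distrib)
  have y: "(-1) ^ (Suc j + Suc j div p) * real ((Q - 1) choose (Suc j div p))
        + (-1) ^ (j + j div p) * real ((Q - 1) choose (j div p))
      = (if p dvd Suc j then (-1) ^ (Suc j + Suc j div p) * real (Q choose (Suc j div p)) else (0::real))"
  proof (cases "p dvd Suc j")
    case True
    then obtain d where d: "Suc j = p * d" by (elim dvdE)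
    have d0: "d > 0" using d by (cases d) auto
    have sd: "Suc j div p = d" using d p by simp
    have jd: "j div p = d - 1" using div_Suc[of j p] True sd by (auto simp: dvd_eq_mod_eq_0)
    have bQ: "real (Q choose d) = real ((Q - 1) choose d) + real ((Q - 1) choose (d - 1))"
      using Q d0 binomial_Suc_Suc[of "Q - 1" "d - 1"] by simp
    have sg: "(-1::real) ^ (j + (d - 1)) = (-1) ^ (Suc j + d)"
    proof -
      obtain e where "d = Suc e" using d0 by (cases d) auto
      then show ?thesis by simp
    qed
    show ?thesis unfolding sd jd sg bQ using True by (simp add: algebra_simps)
  next
    case False
    have sd: "Suc j div p = j div p" using div_Suc[of j p] False by (auto simp: dvd_eq_mod_eq_0)
    show ?thesis unfolding sd using False by simp
  qed
  show ?thesis unfolding F1_def A0f_def by (rule lin_comb[OF b1 y])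
qed

lemma F2_0: "q > 0 \<Longrightarrow> p > 0 \<Longrightarrow> F2 p q Q 0 = 1"
  unfolding F2_def G_def by (simp add: field_simps)

lemma F2_step:
  assumes p: "p > 1" and q: "q > 1"
  shows "F2 p q Q (Suc j) + F2 p q Q j = F1 p q Q (Suc j)"
proof -
  have bq: "real ((q - 1) choose Suc j) = real ((q - 2) choose Suc j) + real ((q - 2) choose j)"
    using q binomial_Suc_Suc[of "q - 2" j] by (simp add: numeral_2_eq_2 Suc_diff_Suc)
  have b1: "real p * real ((q - 2) choose Suc j) / real q + real p * real ((q - 2) choose j) / real q
      = real p * real ((q - 1) choose Suc j) / real q" unfolding bq by (simp add: distrib_left add_divide_distrib)
  have y: "(-1) ^ Suc j * (\<Sum>i<Suc (Suc j). G p Q i) + (-1) ^ j * (\<Sum>i<Suc j. G p Q i)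
      = (-1) ^ (Suc j + Suc j div p) * real ((Q - 1) choose (Suc j div p))"
    unfolding sum.lessThan_Suc[of _ "Suc j"] G_def by (simp add: algebra_simps power_add)
  show ?thesis unfolding F2_def F1_def by (rule lin_comb[OF b1 y])
qed

lemma sum_lessThan_add: fixes n k :: nat shows "(\<Sum>i<n + k. f i) = (\<Sum>i<n. f i) + (\<Sum>i<k. (f (n + i) :: real))"
  by (induction k) (simp_all add: add_ac)

lemma G_blocks:
  assumes p: "p > 1" and Q: "Q > 1"
  shows "(\<Sum>i<(Suc m) * p. G p Q i) = real p * (-1) ^ m * real ((Q - 2) choose m)"
proof (induction m)
  case 0
  have "(\<Sum>i<p. G p Q i) = (\<Sum>i<p. (1::real))"
    by (rule sum.cong) (auto simp: G_def)
  then show ?case by simp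
next
  case (Suc m)
  have blk: "(\<Sum>i<p. G p Q (Suc m * p + i)) = (\<Sum>i<p. (-1) ^ Suc m * real ((Q - 1) choose Suc m))"
  proof (rule sum.cong[OF refl])
    fix i assume "i \<in> {..<p}"
    then have "(Suc m * p + i) div p = Suc m" using p by (subst div_mult_self3) auto
    then show "G p Q (Suc m * p + i) = (-1) ^ Suc m * real ((Q - 1) choose Suc m)" by (simp add: G_def)
  qed
  have bQ: "real ((Q - 1) choose Suc m) = real ((Q - 2) choose Suc m) + real ((Q - 2) choose m)"
    using Q binomial_Suc_Suc[of "Q - 2" m] by (simp add: numeral_2_eq_2 Suc_diff_Suc)
  have "(\<Sum>i<Suc (Suc m) * p. G p Q i) = (\<Sum>i<Suc m * p + p. G p Q i)" by (simp add: add.commute)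
  also have "\<dots> = (\<Sum>i<Suc m * p. G p Q i) + (\<Sum>i<p. G p Q (Suc m * p + i))" by (rule sum_lessThan_add)
  also have "\<dots> = real p * (-1) ^ m * real ((Q - 2) choose m) + real p * ((-1) ^ Suc m * real ((Q - 1) choose Suc m))"
    unfolding Suc.IH blk by simp
  also have "\<dots> = real p * (-1) ^ Suc m * real ((Q - 2) choose Suc m)"
    unfolding bQ by (simp add: algebra_simps)
  finally show ?case .
qed



theorem corollary3p4:
  fixes b :: "'a::{field,finite}" and k :: nat
  defines "q \<equiv> card (UNIV :: 'a set)" and "p \<equiv> semiring_char TYPE('a)"
  assumes "q > 2"
    and "1 \<le> k" and "k \<le> q - 2"
    and "k mod p = p - 1"
    and "b \<in> range (of_nat :: nat \<Rightarrow> 'a)"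
  shows "real (N_subsets k b (UNIV - {0, 1})) =
           real ((q - 2) choose k) / real q
         + (-1) ^ (k + k div p) * ((real q - real p) / real q)
             * ((real q / real p - 2) gchoose (k div p))"
proof -
  define Q where "Q = card (Cos :: 'a set set)"
  have pq: "p * Q = q" unfolding p_def Q_def q_def by (rule card_Cos)
  have p1: "p > 1" unfolding p_def by (rule CHAR_gt1)
  have q2: "q > 2" by fact
  define m where "m = k div p"
  have km: "k = p * m + (p - 1)" using assms(6) unfolding m_def by (metis div_mult_mod_eq mult.commute)
  have sk: "Suc k = Suc m * p" using km p1 by (simp add: algebra_simps)
  have Q2: "Q > 1"
  proof (rule ccontr)
    assume "\<not> Q > 1"
    then have "Q \<le> 1" by simp
    then have "q \<le> p" using pq by (metis mult.right_neutral mult_le_mono2)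
    moreover have "k \<ge> p - 1" using km by simp
    ultimately show False using assms(5) p1 q2 by linarith
  qed
  have A0: "real (Acnt (UNIV :: 'a set) j) = A0f p q Q j" for j
    unfolding A0f_def A0_formula p_def q_def Q_def by (simp add: mult.assoc)
  have A1: "real (Acnt (UNIV - {0} :: 'a set) j) = F1 p q Q j" for j
  proof (induction j)
    case 0 then show ?case using F1_0[of q p Q] p1 q2 by (simp add: Acnt_0)
  next
    case (Suc j)
    have "Acnt (UNIV :: 'a set) (Suc j) = Acnt (UNIV - {0::'a}) (Suc j) + Acnt (UNIV - {0::'a}) j"
      by (rule Acnt_rec) auto
    then have "real (Acnt (UNIV - {0} :: 'a set) (Suc j)) = A0f p q Q (Suc j) - F1 p q Q j"
      using A0[of "Suc j"] Suc.IH by simp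
    also have "\<dots> = F1 p q Q (Suc j)" using F1_step[of p q Q j] p1 q2 Q2 by simp
    finally show ?case .
  qed
  have A2: "real (Acnt (UNIV - {0} - {1} :: 'a set) j) = F2 p q Q j" for j
  proof (induction j)
    case 0 then show ?case using F2_0[of q p Q] p1 q2 by (simp add: Acnt_0)
  next
    case (Suc j)
    have "Acnt (UNIV - {0} :: 'a set) (Suc j) = Acnt (UNIV - {0} - {1::'a}) (Suc j) + Acnt (UNIV - {0} - {1::'a}) j"
      by (rule Acnt_rec) auto
    then have "real (Acnt (UNIV - {0} - {1} :: 'a set) (Suc j)) = F1 p q Q (Suc j) - F2 p q Q j"
      using A1[of "Suc j"] Suc.IH by simp
    also have "\<dots> = F2 p q Q (Suc j)" using F2_step[of p q Q j] p1 q2 by simp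
    finally show ?case .
  qed
  have bF: "b \<in> Fp" using assms(7) unfolding Fp_def .
  have DC: "Acnt (UNIV - {0, 1} :: 'a set) k = p * N_subsets k b (UNIV - {0, 1})"
    unfolding p_def by (rule D_count[OF assms(6)[unfolded p_def] bF])
  have e: "UNIV - {0} - {1} = (UNIV - {0, 1} :: 'a set)" by auto
  have "real p * real (N_subsets k b (UNIV - {0, 1})) = F2 p q Q k"
    using A2[of k] DC unfolding e by simp
  also have "F2 p q Q k = real p * real ((q - 2) choose k) / real q
     + (real q - real p) / real q * ((-1) ^ k * (real p * (-1) ^ m * real ((Q - 2) choose m)))"
    unfolding F2_def sk G_blocks[OF p1 Q2] ..
  finally have N: "real p * real (N_subsets k b (UNIV - {0, 1})) = real p * (real ((q - 2) choose k) / real q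
     + (-1) ^ (k + m) * ((real q - real p) / real q) * real ((Q - 2) choose m))"
    by (simp add: algebra_simps power_add)
  have qp: "real q / real p = real Q" using pq p1 by (metis nonzero_mult_div_cancel_left of_nat_mult
        of_nat_0_less_iff less_trans zero_less_one less_irrefl)
  have g: "(real q / real p - 2) gchoose m = real ((Q - 2) choose m)"
    unfolding qp binomial_gbinomial using Q2 by (simp add: of_nat_diff)
  show ?thesis unfolding m_def[symmetric] using N p1 g by simp
qed

end
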